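(* Let $0\le\gamma<1$, $p\in(0,2]$, and let $f$ be analytic in $\Omega_\gamma$ with $|f(z)|\le1$ on $\Omega_\gamma$, with power series $f(z)=\sum_{n=0}^\infty a_nz^n$ in $\mathbb{D}$. Let $a,b,c>-1$ be real parameters for which the Gaussian hypergeometric function $F(x)={}_2F_1(a,b;c;x)=\sum_{n=0}^\infty c_nx^n$, $c_n=\frac{(a)_n(b)_n}{(c)_n\,n!}$, is defined, and assume that all $c_n$ with $n\ge1$ have the same sign. Let $R^\gamma_p$ be the minimal positive root in $(0,1)$ of the equation $|F(a,b;c;x)-1|=(1+\gamma)\frac{p}{2}$. Then $$|a_0|^p+\sum_{n=1}^\infty|c_n||a_n|r^n\le1\quad\text{for all }0\le r\le R^\gamma_p,$$ and the number $R^\gamma_p$ cannot be improved.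
   Context: For $0\le\gamma<1$, $\Omega_\gamma:=\{z\in\mathbb{C}: |z+\frac{\gamma}{1-\gamma}|<\frac{1}{1-\gamma}\}$, a disk containing the unit disk $\mathbb{D}$. $(x)_n$ is the Pochhammer symbol: $(x)_0=1$, $(x)_n=x(x+1)\cdots(x+n-1)$ for $n\ge1$. *)

theory Defs
  imports "HOL-Analysis.Analysis"
begin

definition Omega :: "real \<Rightarrow> complex set" where
  "Omega \<gamma> = ball (- complex_of_real (\<gamma> / (1 - \<gamma>))) (1 / (1 - \<gamma>))"

definition hyp_coeff :: "real \<Rightarrow> real \<Rightarrow> real \<Rightarrow> nat \<Rightarrow> real" where
  "hyp_coeff a b c n = pochhammer a n * pochhammer b n / (pochhammer c n * fact n)"

definition hyp2F1 :: "real \<Rightarrow> real \<Rightarrow> real \<Rightarrow> real \<Rightarrow> real" where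
  "hyp2F1 a b c x = (\<Sum>n. hyp_coeff a b c n * x ^ n)"

end

theory Submission
  imports Defs "HOL-Complex_Analysis.Complex_Analysis" "HOL-Real_Asymp.Real_Asymp"
begin

lemma SP0:
  fixes H :: "complex \<Rightarrow> complex"
  assumes hol: "H holomorphic_on ball 0 1" and bd: "\<And>v. v \<in> ball 0 1 \<Longrightarrow> norm (H v) \<le> 1"
  shows "norm (deriv H 0) \<le> 1 - (norm (H 0))^2"
proof (cases "norm (H 0) = 1")
  case True
  have "H constant_on ball 0 1"
    by (rule maximum_modulus_principle[OF hol open_ball connected_ball open_ball subset_refl, of 0]) (use bd True in auto)
  then obtain c where c: "\<forall>v\<in>ball 0 1. H v = c" by (auto simp: constant_on_def)
  have "deriv H 0 = deriv (\<lambda>_. c) 0"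
  proof (rule deriv_cong_ev)
    show "\<forall>\<^sub>F x in nhds 0. H x = c"
      using c by (intro eventually_nhds_in_open[of "ball 0 1", THEN eventually_mono]) auto
  qed auto
  then show ?thesis using True by simp
next
  case False
  then have a1: "norm (H 0) < 1" using bd[of 0] by force
  have lt: "norm (H v) < 1" if v: "v \<in> ball 0 1" for v
  proof (rule ccontr)
    assume "\<not> norm (H v) < 1"
    then have "norm (H v) = 1" using bd[OF v] by auto
    then have "H constant_on ball 0 1"
      by (intro maximum_modulus_principle[OF hol open_ball connected_ball open_ball subset_refl v]) (use bd in auto)
    then have "H 0 = H v" using v by (auto simp: constant_on_def)
    then show False using a1 \<open>norm (H v) = 1\<close> by auto
  qed
  define a where "a = H 0"
  define B where "B = Moebius_function 0 a \<circ> H"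
  have a1': "norm a < 1" using a1 a_def by simp
  have holB: "B holomorphic_on ball 0 1"
    unfolding B_def
    by (rule holomorphic_on_compose_gen[OF hol Moebius_function_holomorphic[OF a1']]) (use lt in auto)
  have B0: "B 0 = 0" by (simp add: B_def a_def Moebius_function_eq_zero)
  have Blt: "norm (B z) < 1" if "norm z < 1" for z
    unfolding B_def o_def by (rule Moebius_function_norm_lt_1[OF a1' lt]) (use that in auto)
  have dB: "norm (deriv B 0) \<le> 1"
    using Schwarz_Lemma(2)[OF holB B0 Blt, of 0] by auto
  have dH: "(H has_field_derivative deriv H 0) (at 0)"
    using hol by (intro holomorphic_derivI[of H "ball 0 1"]) auto
  have eqa: "cnj a * a = of_real ((norm a)^2)"
    by (metis complex_norm_square mult.commute)
  have na2: "(norm a)^2 < 1" using a1' by (simp add: power_less_one_iff abs_square_less_1)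
  have den: "1 - cnj a * a \<noteq> 0"
  proof
    assume "1 - cnj a * a = 0"
    then have "cnj a * a = 1" by simp
    then have "complex_of_real ((norm a)^2) = complex_of_real 1" by (metis eqa of_real_1)
    then have "(norm a)^2 = 1" using of_real_eq_iff by blast
    then show False using na2 by simp
  qed
  have "((\<lambda>v. (H v - a) / (1 - cnj a * H v)) has_field_derivative deriv H 0 / (1 - cnj a * a)) (at 0)"
    apply (rule derivative_eq_intros dH refl)+
    using den by (simp_all add: a_def[symmetric] power2_eq_square)
  then have "(B has_field_derivative deriv H 0 / (1 - cnj a * a)) (at 0)"
    by (simp add: B_def o_def Moebius_function_def)
  then have dBe0: "deriv B 0 = deriv H 0 / (1 - cnj a * a)" by (rule DERIV_imp_deriv)
  define t where "t = 1 - (norm a)^2"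
  have t: "t > 0" using na2 by (simp add: t_def)
  have "1 - cnj a * a = complex_of_real t"
    unfolding t_def by (metis eqa of_real_1 of_real_diff)
  then have dBe: "deriv B 0 = deriv H 0 / complex_of_real t" using dBe0 by simp
  have "norm (deriv B 0) = norm (deriv H 0) / t" using t by (simp add: dBe norm_divide)
  then have "norm (deriv H 0) / t \<le> 1" using dB by simp
  then have "norm (deriv H 0) \<le> t" using t by (simp add: divide_le_eq)
  then show ?thesis by (simp add: t_def a_def)
qed

lemma root_unity_sum:
  assumes k: "k \<ge> 1"
  defines "\<omega> \<equiv> exp (2 * of_real pi * \<i> / of_nat k)"
  shows "(\<Sum>j<k. (\<omega>^n)^j) = (if k dvd n then of_nat k else 0)"
proof -
  have wn: "\<omega>^n = exp(2 * of_real pi * \<i> * of_nat n / of_nat k)" for n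
    unfolding \<omega>_def by (simp add: exp_of_nat_mult[symmetric] algebra_simps)
  show ?thesis
  proof (cases "k dvd n")
    case True
    then have "\<omega>^n = 1" using complex_root_unity_eq_1[OF k, of n] wn by simp
    then show ?thesis using True by simp
  next
    case False
    then have ne: "\<omega>^n \<noteq> 1" using complex_root_unity_eq_1[OF k, of n] wn by simp
    have "(\<omega>^n)^k = (\<omega>^k)^n" by (simp add: power_mult[symmetric] mult.commute)
    also have "\<omega>^k = 1" using complex_root_unity_eq_1[OF k, of k] wn[of k] by simp
    finally have "(\<omega>^n)^k = 1" by simp
    then show ?thesis using geometric_sum[OF ne, of k] False by simp
  qed
qed

lemma norm_root_unity:
  assumes k: "k \<ge> 1"
  shows "norm (exp (2 * of_real pi * \<i> / of_nat k)) = 1"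
proof -
  have "2 * of_real pi * \<i> / of_nat k = \<i> * complex_of_real (2 * pi / real k)" by simp
  then show ?thesis by (metis norm_exp_i_times)
qed

lemma kth_root:
  fixes v :: complex
  assumes k: "k \<ge> 1" and v: "norm v < 1"
  obtains u where "u^k = v" "norm u < 1"
proof -
  define u where "u = (if v = 0 then 0 else exp (Ln v / of_nat k))"
  have uk: "u^k = v"
  proof (cases "v = 0")
    case True then show ?thesis using k by (simp add: u_def)
  next
    case False
    have "u^k = exp (of_nat k * (Ln v / of_nat k))" by (simp add: u_def False exp_of_nat_mult[symmetric])
    also have "of_nat k * (Ln v / of_nat k) = Ln v" using k by simp
    finally show ?thesis using False by simp
  qed
  have "norm u < 1"
  proof (rule ccontr)
    assume "\<not> norm u < 1"
    then have "1 \<le> norm u ^ k" by (simp add: one_le_power)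
    moreover have "norm v = norm u ^ k" using uk by (simp add: norm_power[symmetric])
    ultimately show False using v by simp
  qed
  then show ?thesis using uk that by blast
qed

lemma wiener:
  fixes G :: "complex \<Rightarrow> complex"
  assumes hol: "G holomorphic_on ball 0 1" and bd: "\<And>u. u \<in> ball 0 1 \<Longrightarrow> norm (G u) \<le> 1"
    and k: "k \<ge> 1"
  shows "norm ((deriv^^k) G 0 / fact k) \<le> 1 - (norm (G 0))^2"
proof -
  define g where "g n = (deriv^^n) G 0 / fact n" for n
  have gs: "(\<lambda>n. g n * u^n) sums G u" if "norm u < 1" for u
    using holomorphic_power_series[OF hol, of u] that by (simp add: g_def)
  define \<omega> where "\<omega> = exp (2 * of_real pi * \<i> / of_nat k)"
  have nw: "norm \<omega> = 1" using norm_root_unity[OF k] by (simp add: \<omega>_def)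
  have rs: "(\<Sum>j<k. (\<omega>^n)^j) = (if k dvd n then of_nat k else 0)" for n
    using root_unity_sum[OF k] by (simp add: \<omega>_def)
  have avg: "(\<lambda>n. g n * u^n * (if k dvd n then of_nat k else 0)) sums (\<Sum>j<k. G (\<omega>^j * u))"
    if u: "norm u < 1" for u
  proof -
    have "(\<lambda>n. \<Sum>j<k. g n * (\<omega>^j * u)^n) sums (\<Sum>j<k. G (\<omega>^j * u))"
      by (rule sums_sum, rule gs) (simp add: norm_mult norm_power nw u)
    moreover have "(\<Sum>j<k. g n * (\<omega>^j * u)^n) = g n * u^n * (if k dvd n then of_nat k else 0)" for n
    proof -
      have "(\<Sum>j<k. g n * (\<omega>^j * u)^n) = g n * u^n * (\<Sum>j<k. (\<omega>^n)^j)"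
        by (simp add: sum_distrib_left power_mult_distrib power_mult[symmetric] mult.commute mult.left_commute)
      then show ?thesis by (simp add: rs)
    qed
    ultimately show ?thesis by simp
  qed
  define Hc where "Hc m = g (m * k)" for m
  have smk: "strict_mono (\<lambda>m::nat. m * k)" using k by (intro strict_monoI) simp
  have Hs0: "(\<lambda>m. Hc m * v^m * of_nat k) sums (\<Sum>j<k. G (\<omega>^j * u))"
    if u: "norm u < 1" and uv: "u^k = v" for u v
  proof -
    have "(\<lambda>m. (\<lambda>n. g n * u^n * (if k dvd n then of_nat k else 0)) (m * k)) sums (\<Sum>j<k. G (\<omega>^j * u))"
      by (rule sums_mono_reindex[OF smk, THEN iffD2, OF _ avg[OF u]]) (auto simp: dvd_def mult.commute)
    then show ?thesis by (simp add: Hc_def uv[symmetric] power_mult[symmetric] mult.commute)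
  qed
  define H where "H v = (\<Sum>m. Hc m * v^m)" for v
  have Hs: "(\<lambda>m. Hc m * v^m) sums H v \<and> norm (H v) \<le> 1" if v: "norm v < 1" for v
  proof -
    obtain u where uv: "u^k = v" and u: "norm u < 1" using kth_root[OF k v] by blast
    have "(\<lambda>m. Hc m * v^m * of_nat k / of_nat k) sums ((\<Sum>j<k. G (\<omega>^j * u)) / of_nat k)"
      by (rule sums_divide[OF Hs0[OF u uv]])
    then have s: "(\<lambda>m. Hc m * v^m) sums ((\<Sum>j<k. G (\<omega>^j * u)) / of_nat k)" using k by simp
    then have "H v = (\<Sum>j<k. G (\<omega>^j * u)) / of_nat k" by (simp add: H_def sums_iff)
    moreover have "norm (\<Sum>j<k. G (\<omega>^j * u)) \<le> of_nat k"
    proof -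
      have "norm (\<Sum>j<k. G (\<omega>^j * u)) \<le> (\<Sum>j<k. norm (G (\<omega>^j * u)))" by (rule norm_sum)
      also have "\<dots> \<le> (\<Sum>j<k. 1)"
        by (intro sum_mono bd) (simp add: norm_mult norm_power nw u)
      finally show ?thesis by simp
    qed
    ultimately have "norm (H v) \<le> 1" using k by (simp add: norm_divide)
    then show ?thesis using s by (simp add: H_def sums_iff)
  qed
  have holH: "H holomorphic_on ball 0 1"
    by (rule power_series_holomorphic[of 0 1 Hc]) (use Hs in auto)
  have fpsH: "H has_fps_expansion Abs_fps Hc"
  proof (rule has_fps_expansionI)
    show "\<forall>\<^sub>F u in nhds 0. (\<lambda>n. fps_nth (Abs_fps Hc) n * u ^ n) sums H u"
      using Hs by (intro eventually_nhds_in_open[of "ball 0 1", THEN eventually_mono]) auto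
  qed
  have "Hc 1 = deriv H 0" using fps_nth_fps_expansion[OF fpsH, of 1] by simp
  moreover have "Hc 0 = H 0" using fps_nth_fps_expansion[OF fpsH, of 0] by simp
  moreover have "Hc 0 = G 0" by (simp add: Hc_def g_def)
  moreover have "Hc 1 = g k" by (simp add: Hc_def)
  ultimately show ?thesis
    using SP0[OF holH] Hs by (simp add: g_def)
qed

definition nnr :: "complex \<Rightarrow> bool" where "nnr z \<longleftrightarrow> Im z = 0 \<and> Re z \<ge> 0"

lemma nnr_mult: "nnr a \<Longrightarrow> nnr b \<Longrightarrow> nnr (a * b)"
  by (simp add: nnr_def)

lemma nnr_sum: "(\<And>i. i \<in> S \<Longrightarrow> nnr (f i)) \<Longrightarrow> nnr (sum f S)"
  by (simp add: nnr_def Im_sum Re_sum sum_nonneg)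

lemma nnr_norm: "nnr a \<Longrightarrow> norm a = Re a"
  by (simp add: nnr_def cmod_eq_Re)

lemma fps_pow_nnr:
  fixes A :: "complex fps"
  assumes "\<And>n. nnr (A $ n)"
  shows "nnr ((A ^ i) $ n)"
proof (induction i arbitrary: n)
  case 0 then show ?case by (simp add: nnr_def)
next
  case (Suc i)
  show ?case
    by (simp add: fps_mult_nth, intro nnr_sum nnr_mult assms Suc.IH)
qed

lemma omega_coeff:
  fixes f :: "complex \<Rightarrow> complex" and s :: "nat \<Rightarrow> complex" and \<gamma> :: real
  assumes g0: "0 \<le> \<gamma>" and g1: "\<gamma> < 1"
    and hol: "f holomorphic_on Omega \<gamma>" and bd: "\<forall>z\<in>Omega \<gamma>. norm (f z) \<le> 1"
    and ser: "\<forall>z\<in>ball 0 1. (\<lambda>n. s n * z^n) sums f z" and n: "n \<ge> 1"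
  shows "norm (s n) \<le> (1 - (norm (s 0))^2) / (1 + \<gamma>)"
proof -
  define gm where "gm = complex_of_real \<gamma>"
  define \<psi> where "\<psi> z = z / (1 + gm - gm * z)" for z
  define \<psi>i where "\<psi>i u = (1 + gm) * u / (1 + gm * u)" for u
  define G where "G = f \<circ> \<psi>i"
  have gmz: "norm (gm * z) < 1" if "norm z < 1" for z
  proof -
    have "norm (gm * z) = \<gamma> * norm z" using g0 by (simp add: gm_def norm_mult)
    also have "\<dots> \<le> \<gamma>" using g0 that by (simp add: mult_left_le)
    finally show ?thesis using g1 by simp
  qed
  have D1: "1 + gm * u \<noteq> 0" if "norm u < 1" for u
  proof
    assume "1 + gm * u = 0"
    then have "gm * u = -1" by (simp add: add_eq_0_iff)
    then show False using gmz[OF that] by simp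
  qed
  have D2: "1 + gm - gm * z \<noteq> 0" if "norm z < 1" for z
  proof
    assume "1 + gm - gm * z = 0"
    then have "gm * z = 1 + gm" by simp
    then have "norm (gm * z) = norm (complex_of_real (1 + \<gamma>))" by (simp add: gm_def)
    also have "\<dots> = 1 + \<gamma>" using g0 by (simp only: norm_of_real)
    finally have "norm (gm * z) = 1 + \<gamma>" .
    then show False using gmz[OF that] g0 by simp
  qed
  have r1: "1 + \<gamma> \<noteq> 0" using g0 by simp
  have P1: "complex_of_real (1 + \<gamma>) \<noteq> 0" using r1 of_real_eq_0_iff by blast
  have D3: "1 + gm \<noteq> 0" using P1 unfolding gm_def by (metis of_real_1 of_real_add)
  have ball_sub: "ball 0 1 \<subseteq> Omega \<gamma>"
  proof
    fix z :: complex assume "z \<in> ball 0 1"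
    then have z: "norm z < 1" by simp
    have "norm (z + complex_of_real (\<gamma> / (1 - \<gamma>))) \<le> norm z + \<gamma> / (1 - \<gamma>)"
    proof -
      have nn: "\<gamma> / (1 - \<gamma>) \<ge> 0" using g0 g1 by simp
      have "norm (complex_of_real (\<gamma> / (1 - \<gamma>))) = \<gamma> / (1 - \<gamma>)"
        by (simp only: norm_of_real abs_of_nonneg[OF nn])
      then show ?thesis using norm_triangle_ineq[of z "complex_of_real (\<gamma> / (1 - \<gamma>))"] by linarith
    qed
    also have "\<dots> < 1 + \<gamma> / (1 - \<gamma>)" using z by simp
    also have "\<dots> = 1 / (1 - \<gamma>)" using g1 by (simp add: field_simps)
    finally show "z \<in> Omega \<gamma>" by (simp add: Omega_def dist_norm norm_minus_commute)
  qed
  have psii_in: "\<psi>i u \<in> Omega \<gamma>" if u: "norm u < 1" for u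
  proof -
    have e: "(1 - gm) * \<psi>i u + gm = Moebius_function 0 (- gm) u"
      using D1[OF u] by (simp add: \<psi>i_def Moebius_function_def gm_def field_simps)
    have "norm (Moebius_function 0 (- gm) u) < 1"
      by (rule Moebius_function_norm_lt_1) (use g0 g1 u in \<open>auto simp: gm_def\<close>)
    then have "norm ((1 - gm) * \<psi>i u + gm) < 1" using e by simp
    moreover have "(1 - gm) * \<psi>i u + gm = (1 - gm) * (\<psi>i u + complex_of_real (\<gamma> / (1 - \<gamma>)))"
      using g1 by (simp add: gm_def field_simps)
    moreover have "norm (1 - gm) = 1 - \<gamma>" using g1
      by (metis abs_of_pos diff_gt_0_iff_gt norm_of_real of_real_1 of_real_diff gm_def)
    ultimately have "(1 - \<gamma>) * norm (\<psi>i u + complex_of_real (\<gamma> / (1 - \<gamma>))) < 1"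
      by (simp add: norm_mult)
    then have "norm (\<psi>i u + complex_of_real (\<gamma> / (1 - \<gamma>))) < 1 / (1 - \<gamma>)"
      using g1 by (simp add: field_simps)
    then show ?thesis by (simp add: Omega_def dist_norm norm_minus_commute)
  qed
  have holpsii: "\<psi>i holomorphic_on ball 0 1"
    unfolding \<psi>i_def by (intro holomorphic_intros) (use D1 in auto)
  have holG: "G holomorphic_on ball 0 1"
    unfolding G_def by (rule holomorphic_on_compose_gen[OF holpsii hol]) (use psii_in in auto)
  have bdG: "norm (G u) \<le> 1" if "u \<in> ball 0 1" for u
    using bd psii_in that by (simp add: G_def)
  have f0: "f 0 = s 0" using ser by (metis centre_in_ball powser_sums_zero_iff zero_less_one)
  have G0: "G 0 = s 0" using f0 by (simp add: G_def \<psi>i_def)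
  have wi: "norm (fps_expansion G 0 $ i) \<le> 1 - (norm (s 0))^2" if "i \<ge> 1" for i
    using wiener[OF holG _ that] bdG G0 by (simp add: fps_expansion_def)
  have anG: "G analytic_on {0}"
    using holG analytic_on_open[of "ball 0 1" G] by (meson analytic_on_subset centre_in_ball empty_subsetI insert_subset open_ball zero_less_one)
  have fpsG: "G has_fps_expansion fps_expansion G 0"
    by (rule analytic_at_imp_has_fps_expansion_0[OF anG])
  define c where "c = \<gamma> / (1 + \<gamma>)"
  have c: "0 \<le> c" "c < 1" using g0 g1 by (auto simp: c_def)
  define \<Psi> where "\<Psi> = Abs_fps (\<lambda>n. if n = 0 then 0 else complex_of_real (c^(n-1) / (1 + \<gamma>)))"
  have fpsPsi: "\<psi> has_fps_expansion \<Psi>"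
  proof (rule has_fps_expansionI)
    have "(\<lambda>n. fps_nth \<Psi> n * z ^ n) sums \<psi> z" if z: "norm z < 1" for z
    proof -
      have cz: "norm (complex_of_real c * z) < 1"
      proof -
        have "norm (complex_of_real c * z) = c * norm z" using c by (simp add: norm_mult)
        also have "\<dots> \<le> c" using c z by (simp add: mult_left_le)
        finally show ?thesis using c by simp
      qed
      have "(\<lambda>m. z / complex_of_real (1 + \<gamma>) * (complex_of_real c * z)^m) sums
             (z / complex_of_real (1 + \<gamma>) * (1 / (1 - complex_of_real c * z)))"
        by (rule sums_mult[OF geometric_sums[OF cz]])
      moreover have "z / complex_of_real (1 + \<gamma>) * (1 / (1 - complex_of_real c * z)) = \<psi> z"
      proof -
        have rc: "(1 + \<gamma>) * c = \<gamma>" using r1 by (simp add: c_def)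
        have cc: "(1 + complex_of_real \<gamma>) * complex_of_real c = complex_of_real \<gamma>"
          by (metis of_real_1 of_real_add of_real_mult rc)
        have k: "complex_of_real (1 + \<gamma>) * (1 - complex_of_real c * z) = 1 + gm - gm * z"
        proof -
          have "complex_of_real (1 + \<gamma>) * (1 - complex_of_real c * z)
               = complex_of_real (1 + \<gamma>) - (complex_of_real (1 + \<gamma>) * complex_of_real c) * z"
            by (simp add: algebra_simps)
          also have "\<dots> = 1 + gm - gm * z" by (simp add: cc gm_def)
          finally show ?thesis .
        qed
        have "z / complex_of_real (1 + \<gamma>) * (1 / (1 - complex_of_real c * z))
             = z / (complex_of_real (1 + \<gamma>) * (1 - complex_of_real c * z))" by simp
        also have "\<dots> = \<psi> z" by (simp only: k \<psi>_def)
        finally show ?thesis .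
      qed
      moreover have "z / complex_of_real (1 + \<gamma>) * (complex_of_real c * z)^m = fps_nth \<Psi> (Suc m) * z ^ (Suc m)" for m
        by (simp add: \<Psi>_def power_mult_distrib field_simps)
      ultimately have "(\<lambda>m. fps_nth \<Psi> (Suc m) * z ^ (Suc m)) sums \<psi> z" by simp
      then show ?thesis by (subst (asm) sums_Suc_iff) (simp add: \<Psi>_def)
    qed
    then show "\<forall>\<^sub>F z in nhds 0. (\<lambda>n. fps_nth \<Psi> n * z ^ n) sums \<psi> z"
      by (intro eventually_nhds_in_open[of "ball 0 1", THEN eventually_mono]) auto
  qed
  have Psi0: "fps_nth \<Psi> 0 = 0" by (simp add: \<Psi>_def)
  have nnPsi: "nnr (fps_nth \<Psi> m)" for m
    using c g0 by (simp add: \<Psi>_def nnr_def)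
  have fpsf: "f has_fps_expansion Abs_fps s"
  proof (rule has_fps_expansionI)
    show "\<forall>\<^sub>F z in nhds 0. (\<lambda>n. fps_nth (Abs_fps s) n * z ^ n) sums f z"
      using ser by (intro eventually_nhds_in_open[of "ball 0 1", THEN eventually_mono]) auto
  qed
  have comp: "(G \<circ> \<psi>) has_fps_expansion (fps_expansion G 0 oo \<Psi>)"
    by (rule has_fps_expansion_compose[OF fpsG fpsPsi Psi0])
  have eqf: "\<forall>\<^sub>F z in nhds 0. (G \<circ> \<psi>) z = f z"
  proof (intro eventually_nhds_in_open[of "ball 0 1", THEN eventually_mono])
    fix z :: complex assume "z \<in> ball 0 1"
    then have z: "norm z < 1" by simp
    define D where "D = 1 + gm - gm * z"
    have Dn: "D \<noteq> 0" using D2[OF z] by (simp add: D_def)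
    have e1: "1 + gm * (z / D) = (1 + gm) / D" using Dn by (simp add: field_simps D_def)
    have "\<psi>i (\<psi> z) = (1 + gm) * (z / D) / (1 + gm * (z / D))" by (simp add: \<psi>i_def \<psi>_def D_def)
    also have "\<dots> = (1 + gm) * (z / D) / ((1 + gm) / D)" by (simp only: e1)
    also have "\<dots> = z" using Dn D3 by simp
    finally have "\<psi>i (\<psi> z) = z" .
    then show "(G \<circ> \<psi>) z = f z" by (simp add: G_def)
  qed auto
  have "f has_fps_expansion (fps_expansion G 0 oo \<Psi>)"
    using comp has_fps_expansion_cong[OF eqf refl] by simp
  then have sfe: "Abs_fps s = fps_expansion G 0 oo \<Psi>"
    using fps_expansion_unique_complex fpsf by blast
  then have sn: "s n = (\<Sum>i=0..n. fps_nth (fps_expansion G 0) i * fps_nth (\<Psi>^i) n)"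
  proof -
    have "s n = fps_nth (Abs_fps s) n" by simp
    also have "\<dots> = fps_nth (fps_expansion G 0 oo \<Psi>) n" by (simp only: sfe)
    finally show ?thesis by (simp only: fps_compose_nth)
  qed
  define E :: "complex fps" where "E = Abs_fps (\<lambda>_. 1)"
  have fpsE: "(\<lambda>u. 1 / (1 - u)) has_fps_expansion E"
  proof (rule has_fps_expansionI)
    show "\<forall>\<^sub>F u in nhds 0. (\<lambda>n. fps_nth E n * u ^ n) sums (1 / (1 - u))"
      by (intro eventually_nhds_in_open[of "ball 0 1", THEN eventually_mono])
         (auto simp: E_def geometric_sums)
  qed
  have comp2: "((\<lambda>u. 1 / (1 - u)) \<circ> \<psi>) has_fps_expansion (E oo \<Psi>)"
    by (rule has_fps_expansion_compose[OF fpsE fpsPsi Psi0])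
  define Q where "Q = Abs_fps (\<lambda>n. if n = 0 then 1 else complex_of_real (1 / (1 + \<gamma>)))"
  have fpsQ: "((\<lambda>u. 1 / (1 - u)) \<circ> \<psi>) has_fps_expansion Q"
  proof (rule has_fps_expansionI)
    have "(\<lambda>n. fps_nth Q n * z ^ n) sums (1 / (1 - \<psi> z))" if z: "norm z < 1" for z
    proof -
      have "(\<lambda>m. z / complex_of_real (1 + \<gamma>) * z^m) sums (z / complex_of_real (1 + \<gamma>) * (1 / (1 - z)))"
        by (rule sums_mult[OF geometric_sums[OF z]])
      moreover have "z / complex_of_real (1 + \<gamma>) * (1 / (1 - z)) + 1 = 1 / (1 - \<psi> z)"
      proof -
        have "1 - z \<noteq> 0" using z by auto
        moreover have "complex_of_real (1 + \<gamma>) \<noteq> 0" by (rule P1)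
        moreover have "1 + gm - gm * z - z \<noteq> 0"
        proof
          assume A: "1 + gm - gm * z - z = 0"
          have "(1 + gm) * (1 - z) = 1 + gm - gm * z - z" by (simp add: algebra_simps)
          then have "(1 + gm) * (1 - z) = 0" using A by simp
          then show False using D3 \<open>1 - z \<noteq> 0\<close> by simp
        qed
        ultimately show ?thesis using D2[OF z] g0
          by (simp add: \<psi>_def gm_def field_simps)
      qed
      moreover have "z / complex_of_real (1 + \<gamma>) * z^m = fps_nth Q (Suc m) * z ^ (Suc m)" for m
        by (simp add: Q_def field_simps)
      ultimately have S1: "(\<lambda>m. fps_nth Q (Suc m) * z ^ (Suc m)) sums (z / complex_of_real (1 + \<gamma>) * (1 / (1 - z)))"
        by simp
      have "z / complex_of_real (1 + \<gamma>) * (1 / (1 - z)) = 1 / (1 - \<psi> z) - 1"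
        using \<open>z / complex_of_real (1 + \<gamma>) * (1 / (1 - z)) + 1 = 1 / (1 - \<psi> z)\<close> by (simp add: eq_diff_eq)
      with S1 have "(\<lambda>m. fps_nth Q (Suc m) * z ^ (Suc m)) sums (1 / (1 - \<psi> z) - 1)" by simp
      then show ?thesis by (subst (asm) sums_Suc_iff) (simp add: Q_def)
    qed
    then show "\<forall>\<^sub>F z in nhds 0. (\<lambda>n. fps_nth Q n * z ^ n) sums ((\<lambda>u. 1 / (1 - u)) \<circ> \<psi>) z"
      by (intro eventually_nhds_in_open[of "ball 0 1", THEN eventually_mono]) auto
  qed
  have "E oo \<Psi> = Q" using fps_expansion_unique_complex[OF comp2 fpsQ] .
  then have "fps_nth (E oo \<Psi>) n = fps_nth Q n" by simp
  moreover have "fps_nth (E oo \<Psi>) n = (\<Sum>i=0..n. fps_nth (\<Psi>^i) n)"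
    by (simp add: fps_compose_nth E_def)
  moreover have "fps_nth Q n = complex_of_real (1 / (1 + \<gamma>))" using n by (simp add: Q_def)
  ultimately have wsum: "(\<Sum>i=0..n. fps_nth (\<Psi>^i) n) = complex_of_real (1 / (1 + \<gamma>))" by simp
  have nn: "nnr (fps_nth (\<Psi>^i) n)" for i by (rule fps_pow_nnr[OF nnPsi])
  define M where "M = 1 - (norm (s 0))^2"
  have "norm (s n) \<le> (\<Sum>i=0..n. norm (fps_nth (fps_expansion G 0) i * fps_nth (\<Psi>^i) n))"
    unfolding sn by (rule norm_sum)
  also have "\<dots> \<le> (\<Sum>i=0..n. M * Re (fps_nth (\<Psi>^i) n))"
  proof (rule sum_mono)
    fix i assume "i \<in> {0..n}"
    show "norm (fps_nth (fps_expansion G 0) i * fps_nth (\<Psi>^i) n) \<le> M * Re (fps_nth (\<Psi>^i) n)"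
    proof (cases "i = 0")
      case True
      then have "fps_nth (\<Psi>^i) n = 0" using n by simp
      then show ?thesis by simp
    next
      case False
      then have "norm (fps_nth (fps_expansion G 0) i) \<le> M" using wi[of i] by (simp add: M_def)
      moreover have "norm (fps_nth (\<Psi>^i) n) = Re (fps_nth (\<Psi>^i) n)" using nnr_norm[OF nn] .
      moreover have "Re (fps_nth (\<Psi>^i) n) \<ge> 0" using nn[of i] by (simp add: nnr_def)
      ultimately show ?thesis by (simp add: norm_mult mult_right_mono)
    qed
  qed
  also have "\<dots> = M * Re (\<Sum>i=0..n. fps_nth (\<Psi>^i) n)" by (simp add: sum_distrib_left Re_sum)
  also have "\<dots> = M / (1 + \<gamma>)" by (simp add: wsum)
  finally show ?thesis by (simp add: M_def)
qed

lemma ratio_lim: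
  fixes a b c :: real
  shows "(\<lambda>n::nat. ((a + real n) * (b + real n)) / ((c + real n) * (real n + 1))) \<longlonglongrightarrow> 1"
  by real_asymp

lemma hyp_coeff_0 [simp]: "hyp_coeff a b c 0 = 1"
  by (simp add: hyp_coeff_def)

lemma hyp_coeff_Suc:
  assumes "\<forall>n::nat. c \<noteq> - real n"
  shows "hyp_coeff a b c (Suc n) = hyp_coeff a b c n * (((a + real n) * (b + real n)) / ((c + real n) * (real n + 1)))"
proof -
  have p: "pochhammer c n \<noteq> 0" using assms by (auto simp: pochhammer_eq_0_iff)
  have cn: "c + real n \<noteq> 0" using assms by (metis add.commute add_eq_0_iff2 add_uminus_conv_diff diff_0)
  show ?thesis using p cn
    by (simp add: hyp_coeff_def pochhammer_Suc field_simps)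
qed

lemma hyp_summable:
  fixes a b c x :: real
  assumes hdef: "\<forall>n::nat. c \<noteq> - real n" and x: "0 \<le> x" "x < 1"
  shows "summable (\<lambda>n. \<bar>hyp_coeff a b c n\<bar> * x^n)"
proof -
  define \<rho> where "\<rho> n = ((a + real n) * (b + real n)) / ((c + real n) * (real n + 1))" for n :: nat
  have "(\<lambda>n. x * \<bar>\<rho> n\<bar>) \<longlonglongrightarrow> x * \<bar>1\<bar>"
    unfolding \<rho>_def by (intro tendsto_intros ratio_lim)
  then have "eventually (\<lambda>n. x * \<bar>\<rho> n\<bar> < (1 + x) / 2) sequentially"
    using x by (intro order_tendstoD) auto
  then obtain N where N: "\<And>n. n \<ge> N \<Longrightarrow> x * \<bar>\<rho> n\<bar> < (1 + x) / 2"
    by (auto simp: eventually_sequentially)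
  show ?thesis
  proof (rule summable_ratio_test[of "(1 + x) / 2" N])
    show "(1 + x) / 2 < 1" using x by simp
    fix n assume n: "N \<le> n"
    have "norm (\<bar>hyp_coeff a b c (Suc n)\<bar> * x ^ Suc n) = (\<bar>hyp_coeff a b c n\<bar> * x^n) * (x * \<bar>\<rho> n\<bar>)"
      using x by (simp add: hyp_coeff_Suc[OF hdef] \<rho>_def abs_mult)
    also have "\<dots> \<le> (\<bar>hyp_coeff a b c n\<bar> * x^n) * ((1 + x) / 2)"
      using N[OF n] x by (intro mult_left_mono) auto
    finally show "norm (\<bar>hyp_coeff a b c (Suc n)\<bar> * x ^ Suc n) \<le> (1 + x) / 2 * norm (\<bar>hyp_coeff a b c n\<bar> * x ^ n)"
      using x by (simp add: mult.commute)
  qed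
qed

lemma S1:
  assumes hdef: "\<forall>n::nat. c \<noteq> - real n" and "0 \<le> x" "x < 1"
  shows "summable (\<lambda>n. \<bar>hyp_coeff a b c (Suc n)\<bar> * x^(Suc n))"
  using summable_Suc_iff[of "\<lambda>n. \<bar>hyp_coeff a b c n\<bar> * x^n"] hyp_summable[OF hdef assms(2,3)] by simp

lemma S2:
  assumes hdef: "\<forall>n::nat. c \<noteq> - real n"
    and hsign: "(\<forall>n\<ge>1. hyp_coeff a b c n \<ge> 0) \<or> (\<forall>n\<ge>1. hyp_coeff a b c n \<le> 0)"
    and x: "0 \<le> x" "x < 1"
  shows "\<bar>hyp2F1 a b c x - 1\<bar> = (\<Sum>n. \<bar>hyp_coeff a b c (Suc n)\<bar> * x^(Suc n))"
proof -
  have Hnn: "0 \<le> (\<Sum>n. \<bar>hyp_coeff a b c (Suc n)\<bar> * x^(Suc n))"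
    using x by (intro suminf_nonneg S1[OF hdef]) auto
  have sa: "summable (\<lambda>n. hyp_coeff a b c n * x^n)"
  proof (rule summable_rabs_cancel)
    show "summable (\<lambda>n. \<bar>hyp_coeff a b c n * x ^ n\<bar>)"
      using hyp_summable[OF hdef x] x by (simp add: abs_mult)
  qed
  have e: "hyp2F1 a b c x - 1 = (\<Sum>n. hyp_coeff a b c (Suc n) * x^(Suc n))"
    using suminf_split_head[OF sa] by (simp add: hyp2F1_def)
  from hsign show ?thesis
  proof
    assume pos: "\<forall>n\<ge>1. hyp_coeff a b c n \<ge> 0"
    have "(\<Sum>n. hyp_coeff a b c (Suc n) * x^(Suc n)) = (\<Sum>n. \<bar>hyp_coeff a b c (Suc n)\<bar> * x^(Suc n))"
    proof (rule suminf_cong)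
      fix n
      have "hyp_coeff a b c (Suc n) \<ge> 0" using pos by simp
      then show "hyp_coeff a b c (Suc n) * x^(Suc n) = \<bar>hyp_coeff a b c (Suc n)\<bar> * x^(Suc n)" by simp
    qed
    then show ?thesis using e Hnn by simp
  next
    assume neg: "\<forall>n\<ge>1. hyp_coeff a b c n \<le> 0"
    have "(\<Sum>n. hyp_coeff a b c (Suc n) * x^(Suc n)) = (\<Sum>n. - (\<bar>hyp_coeff a b c (Suc n)\<bar> * x^(Suc n)))"
    proof (rule suminf_cong)
      fix n
      have "hyp_coeff a b c (Suc n) \<le> 0" using neg by simp
      then show "hyp_coeff a b c (Suc n) * x^(Suc n) = - (\<bar>hyp_coeff a b c (Suc n)\<bar> * x^(Suc n))" by simp
    qed
    also have "\<dots> = - (\<Sum>n. \<bar>hyp_coeff a b c (Suc n)\<bar> * x^(Suc n))"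
      by (rule suminf_minus[OF S1[OF hdef x]])
    finally show ?thesis using e Hnn by simp
  qed
qed

lemma ab_nonzero:
  assumes "\<forall>n. hyp_coeff a b c (Suc n) = 0 \<longrightarrow> False"
  shows "True" by simp

lemma coeff_zero_if:
  assumes "a = 0 \<or> b = 0"
  shows "hyp_coeff a b c (Suc n) = 0"
  using assms by (auto simp: hyp_coeff_def pochhammer_0_left)

lemma Hmono:
  assumes hdef: "\<forall>n::nat. c \<noteq> - real n" and xy: "0 \<le> x" "x \<le> y" "y < 1"
  shows "(\<Sum>n. \<bar>hyp_coeff a b c (Suc n)\<bar> * x^(Suc n)) \<le> (\<Sum>n. \<bar>hyp_coeff a b c (Suc n)\<bar> * y^(Suc n))"
proof (rule suminf_le)
  fix n
  have "x^(Suc n) \<le> y^(Suc n)" using xy by (intro power_mono) auto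
  then show "\<bar>hyp_coeff a b c (Suc n)\<bar> * x^(Suc n) \<le> \<bar>hyp_coeff a b c (Suc n)\<bar> * y^(Suc n)"
    by (rule mult_left_mono) simp
next
  show "summable (\<lambda>n. \<bar>hyp_coeff a b c (Suc n)\<bar> * x^(Suc n))" using xy by (intro S1[OF hdef]) auto
  show "summable (\<lambda>n. \<bar>hyp_coeff a b c (Suc n)\<bar> * y^(Suc n))" using xy by (intro S1[OF hdef]) auto
qed

lemma Hstrict:
  assumes hdef: "\<forall>n::nat. c \<noteq> - real n" and ch1: "hyp_coeff a b c 1 \<noteq> 0"
    and xy: "0 \<le> x" "x < y" "y < 1"
  shows "(\<Sum>n. \<bar>hyp_coeff a b c (Suc n)\<bar> * x^(Suc n)) < (\<Sum>n. \<bar>hyp_coeff a b c (Suc n)\<bar> * y^(Suc n))"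
proof -
  have sx: "summable (\<lambda>n. \<bar>hyp_coeff a b c (Suc n)\<bar> * x^(Suc n))" using xy by (intro S1[OF hdef]) auto
  have sy: "summable (\<lambda>n. \<bar>hyp_coeff a b c (Suc n)\<bar> * y^(Suc n))" using xy by (intro S1[OF hdef]) auto
  have "(\<Sum>n. \<bar>hyp_coeff a b c (Suc n)\<bar> * y^(Suc n)) - (\<Sum>n. \<bar>hyp_coeff a b c (Suc n)\<bar> * x^(Suc n))
      = (\<Sum>n. \<bar>hyp_coeff a b c (Suc n)\<bar> * y^(Suc n) - \<bar>hyp_coeff a b c (Suc n)\<bar> * x^(Suc n))"
    by (rule suminf_diff[OF sy sx])
  also have "\<dots> > 0"
  proof (rule suminf_pos2[where i=0])
    show "summable (\<lambda>n. \<bar>hyp_coeff a b c (Suc n)\<bar> * y^(Suc n) - \<bar>hyp_coeff a b c (Suc n)\<bar> * x^(Suc n))"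
      by (rule summable_diff[OF sy sx])
  next
    fix n
    have "x^(Suc n) \<le> y^(Suc n)" using xy by (intro power_mono) auto
    then have "\<bar>hyp_coeff a b c (Suc n)\<bar> * x^(Suc n) \<le> \<bar>hyp_coeff a b c (Suc n)\<bar> * y^(Suc n)"
      by (rule mult_left_mono) simp
    then show "0 \<le> \<bar>hyp_coeff a b c (Suc n)\<bar> * y^(Suc n) - \<bar>hyp_coeff a b c (Suc n)\<bar> * x^(Suc n)"
      by simp
  next
    have "\<bar>hyp_coeff a b c 1\<bar> * x < \<bar>hyp_coeff a b c 1\<bar> * y" using ch1 xy by simp
    then show "0 < \<bar>hyp_coeff a b c (Suc 0)\<bar> * y^(Suc 0) - \<bar>hyp_coeff a b c (Suc 0)\<bar> * x^(Suc 0)"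
      by simp
  qed
  finally show ?thesis by simp
qed

lemma aux_cancel:
  fixes x A B W :: complex
  assumes "B \<noteq> 0"
  shows "x/(A*B) * (B/W) = x/(A*W)"
proof (cases "A = 0 \<or> W = 0")
  case True then show ?thesis by auto
next
  case False then show ?thesis using assms by (simp add: field_simps)
qed

lemma aux_mob:
  fixes A w :: complex
  assumes "A \<noteq> 0" "1 - A*w \<noteq> 0"
  shows "1/A - (1 - A^2)/(A*(1 - A*w)) = (A - w)/(1 - A*w)"
  using assms by (simp add: field_simps) (simp add: algebra_simps power2_eq_square)

lemma mob_identity:
  fixes A G z :: complex
  assumes A: "A \<noteq> 0" and B: "1 - A*G \<noteq> 0" and C: "1 - A*(G + (1-G)*z) \<noteq> 0"
  shows "(A - (G + (1-G)*z)) / (1 - A*(G + (1-G)*z)) = 1/A - ((1 - A^2)/(A*(1 - A*G))) * (1 / (1 - (A*(1-G)/(1-A*G)) * z))"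
proof -
  have k1: "1 - A*(G + (1-G)*z) = (1 - A*G) - A*(1-G)*z" by (simp add: algebra_simps)
  have k2: "1 - (A*(1-G)/(1-A*G)) * z = ((1 - A*G) - A*(1-G)*z)/(1-A*G)"
    using B by (simp add: field_simps)
  have key: "1 - (A*(1-G)/(1-A*G)) * z = (1 - A*(G + (1-G)*z))/(1-A*G)"
    by (simp only: k2 k1)
  have "1/A - ((1 - A^2)/(A*(1 - A*G))) * (1 / (1 - (A*(1-G)/(1-A*G)) * z))
      = 1/A - ((1 - A^2)/(A*(1 - A*G))) * ((1-A*G) / (1 - A*(G + (1-G)*z)))"
    by (simp only: key divide_divide_eq_right mult_1)
  also have "\<dots> = 1/A - (1 - A^2)/(A*(1 - A*(G + (1-G)*z)))"
    by (simp only: aux_cancel[OF B])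
  also have "\<dots> = (A - (G + (1-G)*z)) / (1 - A*(G + (1-G)*z))"
    by (rule aux_mob[OF A C])
  finally show ?thesis by simp
qed

lemma powr_upper:
  fixes t p :: real assumes "0 \<le> t" "t \<le> 1" "0 < p" "p \<le> 2"
  shows "t powr p + (1 - t^2) * p / 2 \<le> 1"
proof (cases "t = 0")
  case True then show ?thesis using assms by simp
next
  case False
  then have t: "0 < t" using assms by simp
  define q where "q = p/2"
  have "(t^2) powr q * 1 powr (1-q) \<le> q * t^2 + (1-q) * 1"
    by (rule Youngs_inequality_0) (use assms t in \<open>auto simp: q_def\<close>)
  moreover have "(t^2) powr q = t powr p"
  proof -
    have "t^2 = t powr (real 2)" using t by (simp add: powr_realpow)
    then have "(t^2) powr q = t powr (2 * q)" by (simp add: powr_powr)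
    then show ?thesis by (simp add: q_def)
  qed
  ultimately have "t powr p \<le> q * t^2 + (1 - q)" by simp
  moreover have "(1 - t^2) * p / 2 = q - q * t^2" unfolding q_def by (simp add: left_diff_distrib diff_divide_distrib)
  ultimately show ?thesis by linarith
qed

lemma powr_lower:
  fixes t p :: real assumes t: "0 < t" "t \<le> 1" and p: "0 < p" "p \<le> 2"
  shows "1 - t powr p \<le> (p/2) * (1 - t^2) / t^2"
proof -
  define q where "q = p/2"
  define u where "u = t^2"
  have u: "0 < u" "u \<le> 1" using t by (auto simp: u_def power_le_one)
  have "(1/u) powr q * 1 powr (1-q) \<le> q * (1/u) + (1-q) * 1"
    by (rule Youngs_inequality_0) (use p u in \<open>auto simp: q_def\<close>)
  moreover have "u powr q = t powr p"
  proof -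
    have "u = t powr (real 2)" using t by (simp add: powr_realpow u_def)
    then have "u powr q = t powr (2 * q)" by (simp add: powr_powr)
    then show ?thesis by (simp add: q_def)
  qed
  moreover have "(1/u) powr q = 1 / (u powr q)" using u by (simp add: powr_divide)
  ultimately have h: "1 / (t powr p) \<le> q / u + (1 - q)" by simp
  define P where "P = t powr p"
  have P: "0 < P" "P \<le> 1" using t p by (auto simp: P_def powr_le1)
  have "1 \<le> P * (q / u + (1 - q))" using h P by (simp add: P_def divide_le_eq mult.commute)
  then have "1 - P \<le> P * (q * (1 - u) / u)" using u by (simp add: field_simps)
  also have "\<dots> \<le> q * (1 - u) / u" using P u p by (intro mult_left_le_one_le) (auto simp: q_def)
  finally show ?thesis by (simp add: P_def q_def u_def)
qed

lemma zero_in_Omega: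
  assumes "0 \<le> \<gamma>" "\<gamma> < 1"
  shows "0 \<in> Omega \<gamma>"
proof -
  have nn: "\<gamma> / (1 - \<gamma>) \<ge> 0" using assms by simp
  have "norm (complex_of_real (\<gamma> / (1 - \<gamma>))) = \<gamma> / (1 - \<gamma>)"
    by (simp only: norm_of_real abs_of_nonneg[OF nn])
  moreover have "\<gamma> / (1 - \<gamma>) < 1 / (1 - \<gamma>)" using assms by (simp add: divide_strict_right_mono)
  ultimately show ?thesis by (simp add: Omega_def dist_norm)
qed

lemma ball_sub_Omega:
  assumes g0: "0 \<le> \<gamma>" and g1: "\<gamma> < 1"
  shows "ball 0 1 \<subseteq> Omega \<gamma>"
proof
  fix z :: complex assume "z \<in> ball 0 1"
  then have z: "norm z < 1" by simp
  have "norm (z + complex_of_real (\<gamma> / (1 - \<gamma>))) \<le> norm z + \<gamma> / (1 - \<gamma>)"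
  proof -
    have nn: "\<gamma> / (1 - \<gamma>) \<ge> 0" using g0 g1 by simp
    have "norm (complex_of_real (\<gamma> / (1 - \<gamma>))) = \<gamma> / (1 - \<gamma>)"
      by (simp only: norm_of_real abs_of_nonneg[OF nn])
    then show ?thesis using norm_triangle_ineq[of z "complex_of_real (\<gamma> / (1 - \<gamma>))"] by linarith
  qed
  also have "\<dots> < 1 + \<gamma> / (1 - \<gamma>)" using z by simp
  also have "\<dots> = 1 / (1 - \<gamma>)" using g1 by (simp add: field_simps)
  finally show "z \<in> Omega \<gamma>" by (simp add: Omega_def dist_norm norm_minus_commute)
qed

lemma w_in_ball:
  assumes g: "0 \<le> \<gamma>" "\<gamma> < 1" and z: "z \<in> Omega \<gamma>"
  shows "norm (complex_of_real \<gamma> + complex_of_real (1 - \<gamma>) * z) < 1"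
proof -
  have "norm (z + complex_of_real (\<gamma> / (1 - \<gamma>))) < 1 / (1 - \<gamma>)"
    using z by (simp add: Omega_def dist_norm norm_minus_commute)
  then have "(1 - \<gamma>) * norm (z + complex_of_real (\<gamma> / (1 - \<gamma>))) < 1"
    using g by (simp add: field_simps)
  moreover have "complex_of_real \<gamma> + complex_of_real (1 - \<gamma>) * z = complex_of_real (1 - \<gamma>) * (z + complex_of_real (\<gamma> / (1 - \<gamma>)))"
    using g by (simp add: field_simps)
  moreover have "norm (complex_of_real (1 - \<gamma>)) = 1 - \<gamma>" using g by (simp only: norm_of_real)
  ultimately show ?thesis by (simp only: norm_mult)
qed

lemma part1:
  fixes \<gamma> p a b c R r :: real and f :: "complex \<Rightarrow> complex" and s :: "nat \<Rightarrow> complex"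
  assumes h\<gamma>: "0 \<le> \<gamma>" "\<gamma> < 1"
    and hp: "0 < p" "p \<le> 2"
    and hdef: "\<forall>n::nat. c \<noteq> - real n"
    and hR: "0 < R" "R < 1"
    and HR0: "(\<Sum>n. \<bar>hyp_coeff a b c (Suc n)\<bar> * R^(Suc n)) = (1 + \<gamma>) * p / 2"
    and hol: "f holomorphic_on Omega \<gamma>" and bd: "\<forall>z\<in>Omega \<gamma>. norm (f z) \<le> 1"
    and ser: "\<forall>z\<in>ball 0 1. (\<lambda>n. s n * z ^ n) sums f z" and r: "0 \<le> r \<and> r \<le> R"
  shows "norm (s 0) powr p + (\<Sum>n. \<bar>hyp_coeff a b c (Suc n)\<bar> * norm (s (Suc n)) * r ^ Suc n) \<le> 1"
proof -
  define Hf where "Hf x = (\<Sum>n. \<bar>hyp_coeff a b c (Suc n)\<bar> * x^(Suc n))" for x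
  have HR: "Hf R = (1 + \<gamma>) * p / 2" using HR0 by (simp add: Hf_def)
  have S1: "summable (\<lambda>n. \<bar>hyp_coeff a b c (Suc n)\<bar> * x^(Suc n))" if "0 \<le> x" "x < 1" for x
    by (rule S1[OF hdef that])
  have mono: "Hf x \<le> Hf y" if "0 \<le> x" "x \<le> y" "y < 1" for x y
    unfolding Hf_def by (rule Hmono[OF hdef that])
  have f0: "f 0 = s 0" using ser by (metis centre_in_ball powser_sums_zero_iff zero_less_one)
  have s0: "norm (s 0) \<le> 1" using bd zero_in_Omega[OF h\<gamma>] f0 by auto
  define M where "M = 1 - (norm (s 0))^2"
  have M: "0 \<le> M" using s0 by (simp add: M_def abs_square_le_1)
  have cb: "norm (s (Suc n)) \<le> M / (1 + \<gamma>)" for n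
    using omega_coeff[OF h\<gamma> hol bd ser, of "Suc n"] by (simp add: M_def)
  have r1: "r < 1" using r hR by simp
  have MG: "0 \<le> M / (1 + \<gamma>)" using M h\<gamma> by simp
  have le: "\<bar>hyp_coeff a b c (Suc n)\<bar> * norm (s (Suc n)) * r^(Suc n) \<le> M / (1 + \<gamma>) * (\<bar>hyp_coeff a b c (Suc n)\<bar> * r^(Suc n))" for n
  proof -
    have "\<bar>hyp_coeff a b c (Suc n)\<bar> * norm (s (Suc n)) * r^(Suc n) = (\<bar>hyp_coeff a b c (Suc n)\<bar> * r^(Suc n)) * norm (s (Suc n))"
      by (simp add: algebra_simps)
    also have "\<dots> \<le> (\<bar>hyp_coeff a b c (Suc n)\<bar> * r^(Suc n)) * (M / (1 + \<gamma>))"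
      using r by (intro mult_left_mono cb) auto
    finally show ?thesis by (simp add: mult.commute)
  qed
  have sumR: "summable (\<lambda>n. M / (1 + \<gamma>) * (\<bar>hyp_coeff a b c (Suc n)\<bar> * r^(Suc n)))"
    by (rule summable_mult[OF S1]) (use r r1 in auto)
  have sumL: "summable (\<lambda>n. \<bar>hyp_coeff a b c (Suc n)\<bar> * norm (s (Suc n)) * r^(Suc n))"
  proof (rule summable_comparison_test[OF _ sumR])
    show "\<exists>N. \<forall>n\<ge>N. norm (\<bar>hyp_coeff a b c (Suc n)\<bar> * norm (s (Suc n)) * r^(Suc n)) \<le> M / (1 + \<gamma>) * (\<bar>hyp_coeff a b c (Suc n)\<bar> * r^(Suc n))"
      using le r by (intro exI[of _ 0]) (simp add: abs_mult)
  qed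
  have "(\<Sum>n. \<bar>hyp_coeff a b c (Suc n)\<bar> * norm (s (Suc n)) * r^(Suc n)) \<le> (\<Sum>n. M / (1 + \<gamma>) * (\<bar>hyp_coeff a b c (Suc n)\<bar> * r^(Suc n)))"
    by (rule suminf_le[OF le sumL sumR])
  also have "\<dots> = M / (1 + \<gamma>) * Hf r"
    unfolding Hf_def by (rule suminf_mult[OF S1]) (use r r1 in auto)
  also have "\<dots> \<le> M / (1 + \<gamma>) * Hf R"
    using r hR by (intro mult_left_mono[OF mono MG]) auto
  also have "\<dots> = M * p / 2" using HR h\<gamma> by (simp add: field_simps)
  finally have "norm (s 0) powr p + (\<Sum>n. \<bar>hyp_coeff a b c (Suc n)\<bar> * norm (s (Suc n)) * r^(Suc n)) \<le> norm (s 0) powr p + (1 - (norm (s 0))^2) * p / 2"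
    by (simp add: M_def)
  also have "\<dots> \<le> 1" by (rule powr_upper) (use s0 hp in auto)
  finally show ?thesis .
qed

lemma part2:
  fixes \<gamma> p a b c R r :: real
  assumes h\<gamma>: "0 \<le> \<gamma>" "\<gamma> < 1"
    and hp: "0 < p" "p \<le> 2"
    and hdef: "\<forall>n::nat. c \<noteq> - real n"
    and ch1: "hyp_coeff a b c 1 \<noteq> 0"
    and hR: "0 < R" "R < 1"
    and HR0: "(\<Sum>n. \<bar>hyp_coeff a b c (Suc n)\<bar> * R^(Suc n)) = (1 + \<gamma>) * p / 2"
    and r: "R < r \<and> r < 1"
  shows "\<exists>(f :: complex \<Rightarrow> complex) (s :: nat \<Rightarrow> complex).
              f holomorphic_on Omega \<gamma> \<and> (\<forall>z\<in>Omega \<gamma>. norm (f z) \<le> 1) \<and>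
              (\<forall>z\<in>ball 0 1. (\<lambda>n. s n * z ^ n) sums f z) \<and>
              norm (s 0) powr p + (\<Sum>n. \<bar>hyp_coeff a b c (Suc n)\<bar> * norm (s (Suc n)) * r ^ Suc n) > 1"
proof -
  define Hf where "Hf x = (\<Sum>n. \<bar>hyp_coeff a b c (Suc n)\<bar> * x^(Suc n))" for x
  have HR: "Hf R = (1 + \<gamma>) * p / 2" using HR0 by (simp add: Hf_def)
  have S1: "summable (\<lambda>n. \<bar>hyp_coeff a b c (Suc n)\<bar> * x^(Suc n))" if "0 \<le> x" "x < 1" for x
    by (rule S1[OF hdef that])
  have mono: "Hf x \<le> Hf y" if "0 \<le> x" "x \<le> y" "y < 1" for x y
    unfolding Hf_def by (rule Hmono[OF hdef that])
  have strict: "Hf x < Hf y" if "0 \<le> x" "x < y" "y < 1" for x y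
    unfolding Hf_def by (rule Hstrict[OF hdef ch1 that])
  define r' where "r' = (R + r) / 2"
  have r': "R < r'" "r' < r" "r' < 1" using r by (auto simp: r'_def)
  define \<delta> where "\<delta> = Hf r' - (1 + \<gamma>) * p / 2"
  have \<delta>: "0 < \<delta>" using strict[of R r'] r' hR HR by (simp add: \<delta>_def)
  define qf where "qf \<alpha> = \<alpha> * (1 - \<gamma>) * r / (1 - \<alpha> * \<gamma>)" for \<alpha> :: real
  define Lf where "Lf \<alpha> = (p / 2) * (1 - \<gamma>^2) * \<alpha> * (1 - \<alpha> * \<gamma>) / (\<alpha> - \<gamma>)^2" for \<alpha> :: real
  have g1: "1 - \<gamma> \<noteq> 0" using h\<gamma> by simp
  have lim1: "(qf \<longlongrightarrow> 1 * (1 - \<gamma>) * r / (1 - 1 * \<gamma>)) (at_left 1)"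
    unfolding qf_def by (intro tendsto_intros) (use g1 in auto)
  have lim2: "(Lf \<longlongrightarrow> (p / 2) * (1 - \<gamma>^2) * 1 * (1 - 1 * \<gamma>) / (1 - \<gamma>)^2) (at_left 1)"
    unfolding Lf_def by (intro tendsto_intros) (use g1 in auto)
  have v1: "1 * (1 - \<gamma>) * r / (1 - 1 * \<gamma>) = r" using g1 by simp
  have v2: "(p / 2) * (1 - \<gamma>^2) * 1 * (1 - 1 * \<gamma>) / (1 - \<gamma>)^2 = (1 + \<gamma>) * p / 2"
  proof -
    have e: "(1 - \<gamma>^2) * (1 - \<gamma>) = (1 + \<gamma>) * (1 - \<gamma>)^2"
      by (simp add: power2_eq_square algebra_simps)
    have "(p / 2) * (1 - \<gamma>^2) * 1 * (1 - 1 * \<gamma>) = (p / 2) * ((1 - \<gamma>^2) * (1 - \<gamma>))"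
      by (simp add: mult_ac)
    also have "\<dots> = (p / 2) * ((1 + \<gamma>) * (1 - \<gamma>)^2)" by (simp only: e)
    also have "\<dots> = ((1 + \<gamma>) * p / 2) * (1 - \<gamma>)^2" by (simp add: mult_ac)
    finally have num: "(p / 2) * (1 - \<gamma>^2) * 1 * (1 - 1 * \<gamma>) = ((1 + \<gamma>) * p / 2) * (1 - \<gamma>)^2" .
    have dn: "(1 - \<gamma>)^2 \<noteq> 0" using g1 by simp
    show ?thesis by (simp only: num nonzero_mult_div_cancel_right[OF dn])
  qed
  have lt1: "r' < 1 * (1 - \<gamma>) * r / (1 - 1 * \<gamma>)" unfolding v1 using r' by simp
  have ev1: "eventually (\<lambda>\<alpha>. r' < qf \<alpha>) (at_left 1)"
    by (rule order_tendstoD(1)[OF lim1 lt1])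
  have lt2: "(p / 2) * (1 - \<gamma>^2) * 1 * (1 - 1 * \<gamma>) / (1 - \<gamma>)^2 < (1 + \<gamma>) * p / 2 + \<delta>"
    unfolding v2 using \<delta> by linarith
  have ev2: "eventually (\<lambda>\<alpha>. Lf \<alpha> < (1 + \<gamma>) * p / 2 + \<delta>) (at_left 1)"
    by (rule order_tendstoD(2)[OF lim2 lt2])
  have ev3: "eventually (\<lambda>\<alpha>. \<alpha> \<in> {\<gamma><..<1}) (at_left (1::real))"
    using h\<gamma> by (intro eventually_at_left_real) auto
  have "eventually (\<lambda>\<alpha>. r' < qf \<alpha> \<and> Lf \<alpha> < (1 + \<gamma>) * p / 2 + \<delta> \<and> \<alpha> \<in> {\<gamma><..<1}) (at_left (1::real))"
    using ev1 ev2 ev3 by eventually_elim auto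
  then obtain \<alpha> where \<alpha>: "r' < qf \<alpha>" "Lf \<alpha> < (1 + \<gamma>) * p / 2 + \<delta>" "\<gamma> < \<alpha>" "\<alpha> < 1"
    using eventually_happens[of _ "at_left (1::real)"] trivial_limit_at_left_real by force
  have a0: "0 < \<alpha>" using \<alpha> h\<gamma> by simp
  have dpos: "0 < 1 - \<alpha> * \<gamma>"
  proof -
    have "\<alpha> * \<gamma> < 1 * 1" using \<alpha> h\<gamma> a0 by (intro mult_strict_mono') auto
    then show ?thesis by simp
  qed
  define t where "t = (\<alpha> - \<gamma>) / (1 - \<alpha> * \<gamma>)"
  define K where "K = (1 - \<alpha>^2) / (\<alpha> * (1 - \<alpha> * \<gamma>))"
  define q where "q = \<alpha> * (1 - \<gamma>) / (1 - \<alpha> * \<gamma>)"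
  have t: "0 < t" "t \<le> 1"
  proof -
    have "(\<alpha> - 1) * (1 + \<gamma>) \<le> 0" using \<alpha> h\<gamma> by (intro mult_nonpos_nonneg) auto
    then have t1: "\<alpha> - \<gamma> \<le> 1 - \<alpha> * \<gamma>" by (simp add: algebra_simps)
    show "0 < t" using \<alpha> dpos by (simp add: t_def)
    show "t \<le> 1" using t1 dpos by (simp add: t_def)
  qed
  have K: "0 < K"
  proof -
    have "\<alpha>^2 < 1" using \<alpha> a0 by (simp add: power_less_one_iff)
    then show ?thesis using a0 dpos by (simp add: K_def)
  qed
  have K: "0 < K" using \<alpha> dpos a0 by (auto simp: K_def abs_square_less_1 power_less_one_iff)
  have q: "0 < q" "q < 1" using \<alpha> dpos h\<gamma> a0 by (auto simp: q_def field_simps)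
  have tK: "1 / \<alpha> - K = t" using a0 dpos by (simp add: t_def K_def field_simps power2_eq_square)
  have qr: "q * r = qf \<alpha>" by (simp add: q_def qf_def)
  define A where "A = complex_of_real \<alpha>"
  define G where "G = complex_of_real \<gamma>"
  define f where "f z = (A - (G + (1 - G) * z)) / (1 - A * (G + (1 - G) * z))" for z
  define s where "s n = (if n = 0 then complex_of_real (1 / \<alpha>) else 0) - complex_of_real (K * q^n)" for n
  have wG: "G + (1 - G) * z = complex_of_real \<gamma> + complex_of_real (1 - \<gamma>) * z" for z by (simp add: G_def)
  have nA: "norm A < 1" using \<alpha> a0 by (simp add: A_def)
  have den: "1 - A * (G + (1 - G) * z) \<noteq> 0" if "norm (G + (1 - G) * z) < 1" for z
  proof
    assume "1 - A * (G + (1 - G) * z) = 0"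
    then have "A * (G + (1 - G) * z) = 1" by simp
    moreover have "norm (A * (G + (1 - G) * z)) < 1"
      using norm_mult_less[OF nA that] by simp
    ultimately show False by simp
  qed
  have fhol: "f holomorphic_on Omega \<gamma>"
    unfolding f_def by (intro holomorphic_intros) (use den w_in_ball[OF h\<gamma>] wG in auto)
  have fbd: "\<forall>z\<in>Omega \<gamma>. norm (f z) \<le> 1"
  proof
    fix z assume z: "z \<in> Omega \<gamma>"
    define w where "w = G + (1 - G) * z"
    have w: "norm w < 1" using w_in_ball[OF h\<gamma> z] wG by (simp add: w_def)
    have "f z = - Moebius_function 0 A w"
      by (simp add: f_def w_def Moebius_function_def A_def minus_divide_left)
    moreover have "norm (Moebius_function 0 A w) < 1" by (rule Moebius_function_norm_lt_1[OF nA w])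
    ultimately show "norm (f z) \<le> 1" by simp
  qed
  have fser: "\<forall>z\<in>ball 0 1. (\<lambda>n. s n * z ^ n) sums f z"
  proof
    fix z :: complex assume "z \<in> ball 0 1"
    then have z: "norm z < 1" by simp
    have qz: "norm (complex_of_real q * z) < 1"
    proof -
      have "norm (complex_of_real q * z) = q * norm z" using q by (simp add: norm_mult)
      also have "\<dots> < 1 * 1" using q z by (intro mult_strict_mono') auto
      finally show ?thesis by simp
    qed
    have s1: "(\<lambda>n. (if n = 0 then complex_of_real (1 / \<alpha>) else 0)) sums complex_of_real (1 / \<alpha>)"
      using sums_single[of 0 "\<lambda>_. complex_of_real (1 / \<alpha>)"] by simp
    have s2: "(\<lambda>n. complex_of_real K * (complex_of_real q * z)^n) sums (complex_of_real K * (1 / (1 - complex_of_real q * z)))"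
      by (rule sums_mult[OF geometric_sums[OF qz]])
    have "(\<lambda>n. (if n = 0 then complex_of_real (1 / \<alpha>) else 0) - complex_of_real K * (complex_of_real q * z)^n)
          sums (complex_of_real (1 / \<alpha>) - complex_of_real K * (1 / (1 - complex_of_real q * z)))"
      by (rule sums_diff[OF s1 s2])
    moreover have "(if n = 0 then complex_of_real (1 / \<alpha>) else 0) - complex_of_real K * (complex_of_real q * z)^n = s n * z^n" for n
      by (simp add: s_def power_mult_distrib algebra_simps)
    moreover have "complex_of_real (1 / \<alpha>) - complex_of_real K * (1 / (1 - complex_of_real q * z)) = f z"
    proof -
      have A0: "A \<noteq> 0" using a0 by (simp add: A_def)
      have B0: "1 - A * G \<noteq> 0"
      proof -
        have e: "1 - A * G = complex_of_real (1 - \<alpha> * \<gamma>)" by (simp add: A_def G_def)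
        have "complex_of_real (1 - \<alpha> * \<gamma>) \<noteq> 0" using dpos of_real_eq_0_iff by (metis less_irrefl)
        then show ?thesis unfolding e .
      qed
      have zO: "z \<in> Omega \<gamma>" using ball_sub_Omega[OF h\<gamma>] z by auto
      have wz: "norm (G + (1 - G) * z) < 1"
        using w_in_ball[OF h\<gamma> zO] by (simp add: wG)
      have Kc: "complex_of_real K = (1 - A^2) / (A * (1 - A * G))" by (simp add: K_def A_def G_def)
      have qc: "complex_of_real q = A * (1 - G) / (1 - A * G)" by (simp add: q_def A_def G_def)
      have "complex_of_real (1 / \<alpha>) = 1 / A" by (simp add: A_def)
      then show ?thesis
        using mob_identity[OF A0 B0 den[OF wz]] by (simp add: Kc qc f_def)
    qed
    ultimately show "(\<lambda>n. s n * z ^ n) sums f z" by simp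
  qed
  have ns0: "norm (s 0) = t"
  proof -
    have "s 0 = complex_of_real (1 / \<alpha>) - complex_of_real K" by (simp add: s_def)
    also have "\<dots> = complex_of_real (1 / \<alpha> - K)" by (simp only: of_real_diff)
    finally have "s 0 = complex_of_real t" by (simp only: tK)
    then show ?thesis using t by simp
  qed
  have nsS: "norm (s (Suc n)) = K * q^(Suc n)" for n
  proof -
    have nn: "0 \<le> K * q^(Suc n)" using K q by simp
    have "s (Suc n) = - complex_of_real (K * q^(Suc n))" by (simp add: s_def)
    then have "norm (s (Suc n)) = norm (complex_of_real (K * q^(Suc n)))" by (simp only: norm_minus_cancel)
    also have "\<dots> = K * q^(Suc n)" by (simp only: norm_of_real abs_of_nonneg[OF nn])
    finally show ?thesis .
  qed
  have qr1: "0 \<le> q * r" "q * r < 1"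
  proof -
    show "0 \<le> q * r" using q r hR by simp
    have "q * r < 1 * 1" using q r hR by (intro mult_strict_mono') auto
    then show "q * r < 1" by simp
  qed
  have "(\<Sum>n. \<bar>hyp_coeff a b c (Suc n)\<bar> * norm (s (Suc n)) * r ^ Suc n) = (\<Sum>n. K * (\<bar>hyp_coeff a b c (Suc n)\<bar> * (q * r) ^ Suc n))"
    by (intro suminf_cong) (simp add: nsS power_mult_distrib algebra_simps)
  also have "\<dots> = K * Hf (q * r)"
    unfolding Hf_def by (rule suminf_mult[OF S1[OF qr1]])
  finally have sumeq: "(\<Sum>n. \<bar>hyp_coeff a b c (Suc n)\<bar> * norm (s (Suc n)) * r ^ Suc n) = K * Hf (q * r)" .
  have "Hf r' \<le> Hf (q * r)" using mono[of r' "q * r"] r' qr \<alpha>(1) qr1 hR by simp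
  then have HL: "Lf \<alpha> < Hf (q * r)" using \<alpha>(2) by (simp add: \<delta>_def)
  have KL: "K * Lf \<alpha> = (p / 2) * (1 - t^2) / t^2"
  proof -
    have id: "(1 - \<alpha> * \<gamma>)^2 - (\<alpha> - \<gamma>)^2 = (1 - \<alpha>^2) * (1 - \<gamma>^2)"
      by (simp add: power2_eq_square algebra_simps)
    have am: "\<alpha> - \<gamma> \<noteq> 0" using \<alpha> by simp
    have "(1 - t^2) / t^2 = ((1 - \<alpha> * \<gamma>)^2 - (\<alpha> - \<gamma>)^2) / (\<alpha> - \<gamma>)^2"
      using dpos am by (simp add: t_def field_simps)
    also have "\<dots> = (1 - \<alpha>^2) * (1 - \<gamma>^2) / (\<alpha> - \<gamma>)^2" by (simp only: id)
    finally have e1: "(1 - t^2) / t^2 = (1 - \<alpha>^2) * (1 - \<gamma>^2) / (\<alpha> - \<gamma>)^2" .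
    have "K * Lf \<alpha> = (p / 2) * ((1 - \<alpha>^2) * (1 - \<gamma>^2) / (\<alpha> - \<gamma>)^2)"
      using a0 dpos am by (simp add: K_def Lf_def field_simps)
    also have "\<dots> = (p / 2) * ((1 - t^2) / t^2)" by (simp only: e1)
    finally show ?thesis by (simp only: times_divide_eq_right)
  qed
  have "1 - t powr p \<le> K * Lf \<alpha>" using powr_lower[OF t hp] KL by simp
  also have "\<dots> < K * Hf (q * r)" using HL K by simp
  finally have "1 < t powr p + K * Hf (q * r)" by simp
  then have "norm (s 0) powr p + (\<Sum>n. \<bar>hyp_coeff a b c (Suc n)\<bar> * norm (s (Suc n)) * r ^ Suc n) > 1"
    using ns0 sumeq by simp
  then show ?thesis using fhol fbd fser by blast
qed

theorem theorem3p1: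
  fixes \<gamma> p a b c R :: real
  assumes h\<gamma>: "0 \<le> \<gamma>" "\<gamma> < 1"
    and hp: "0 < p" "p \<le> 2"
    and habc: "a > -1" "b > -1" "c > -1"
    and hdef: "\<forall>n::nat. c \<noteq> - real n"
    and hsign: "(\<forall>n\<ge>1. hyp_coeff a b c n \<ge> 0) \<or> (\<forall>n\<ge>1. hyp_coeff a b c n \<le> 0)"
    and hR: "0 < R" "R < 1" "\<bar>hyp2F1 a b c R - 1\<bar> = (1 + \<gamma>) * p / 2"
    and hRmin: "\<forall>x. 0 < x \<and> x < R \<longrightarrow> \<bar>hyp2F1 a b c x - 1\<bar> \<noteq> (1 + \<gamma>) * p / 2"
  shows "(\<forall>(f :: complex \<Rightarrow> complex) (s :: nat \<Rightarrow> complex).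
            f holomorphic_on Omega \<gamma> \<longrightarrow> (\<forall>z\<in>Omega \<gamma>. norm (f z) \<le> 1) \<longrightarrow>
            (\<forall>z\<in>ball 0 1. (\<lambda>n. s n * z ^ n) sums f z) \<longrightarrow>
            (\<forall>r. 0 \<le> r \<and> r \<le> R \<longrightarrow>
               norm (s 0) powr p + (\<Sum>n. \<bar>hyp_coeff a b c (Suc n)\<bar> * norm (s (Suc n)) * r ^ Suc n) \<le> 1))
      \<and> (\<forall>r. R < r \<and> r < 1 \<longrightarrow>
           (\<exists>(f :: complex \<Rightarrow> complex) (s :: nat \<Rightarrow> complex).
              f holomorphic_on Omega \<gamma> \<and> (\<forall>z\<in>Omega \<gamma>. norm (f z) \<le> 1) \<and>
              (\<forall>z\<in>ball 0 1. (\<lambda>n. s n * z ^ n) sums f z) \<and>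
              norm (s 0) powr p + (\<Sum>n. \<bar>hyp_coeff a b c (Suc n)\<bar> * norm (s (Suc n)) * r ^ Suc n) > 1))"
proof -
  have HR0: "(\<Sum>n. \<bar>hyp_coeff a b c (Suc n)\<bar> * R^(Suc n)) = (1 + \<gamma>) * p / 2"
    using S2[OF hdef hsign, of R] hR by simp
  have pos0: "(1 + \<gamma>) * p / 2 > 0" using h\<gamma> hp by simp
  have ab: "a \<noteq> 0 \<and> b \<noteq> 0"
  proof (rule ccontr)
    assume "\<not> (a \<noteq> 0 \<and> b \<noteq> 0)"
    then have "\<forall>n. hyp_coeff a b c (Suc n) = 0" using coeff_zero_if by blast
    then have "(\<Sum>n. \<bar>hyp_coeff a b c (Suc n)\<bar> * R^(Suc n)) = 0" by simp
    then show False using HR0 pos0 by linarith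
  qed
  have c0: "c \<noteq> 0" using hdef by (metis minus_zero of_nat_0)
  have ch1: "hyp_coeff a b c 1 \<noteq> 0"
    using hyp_coeff_Suc[OF hdef, of a b 0] ab c0 by simp
  show ?thesis
  proof (intro conjI allI impI)
    fix f :: "complex \<Rightarrow> complex" and s :: "nat \<Rightarrow> complex" and r :: real
    assume "f holomorphic_on Omega \<gamma>" "\<forall>z\<in>Omega \<gamma>. norm (f z) \<le> 1"
      "\<forall>z\<in>ball 0 1. (\<lambda>n. s n * z ^ n) sums f z" "0 \<le> r \<and> r \<le> R"
    then show "norm (s 0) powr p + (\<Sum>n. \<bar>hyp_coeff a b c (Suc n)\<bar> * norm (s (Suc n)) * r ^ Suc n) \<le> 1"
      by (intro part1[OF h\<gamma> hp hdef hR(1,2) HR0])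
  next
    fix r :: real assume "R < r \<and> r < 1"
    then show "\<exists>(f :: complex \<Rightarrow> complex) (s :: nat \<Rightarrow> complex).
              f holomorphic_on Omega \<gamma> \<and> (\<forall>z\<in>Omega \<gamma>. norm (f z) \<le> 1) \<and>
              (\<forall>z\<in>ball 0 1. (\<lambda>n. s n * z ^ n) sums f z) \<and>
              norm (s 0) powr p + (\<Sum>n. \<bar>hyp_coeff a b c (Suc n)\<bar> * norm (s (Suc n)) * r ^ Suc n) > 1"
      by (rule part2[OF h\<gamma> hp hdef ch1 hR(1,2) HR0])
  qed
qed

end
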